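(* Let $A=\begin{bmatrix}a&b\\c&d\end{bmatrix}$ be a real $2\times2$ matrix with two distinct real standard eigenvalues, at least one of which, $\lambda_A$, is an interior L-eigenvalue of $A$, and suppose $\lambda_A\neq a$. Then for every $\varepsilon>0$ there is $\delta>0$ such that every real $2\times 2$ matrix $B$ with $\|B-A\|_F<\delta$ has an interior L-eigenvalue $\lambda_B$ with $|\lambda_A-\lambda_B|<\varepsilon$.
   Context: $\|\cdot\|_F$ is the Frobenius norm. Lorentz cone $\mathcal{K}=\{(x_1,x_2)^T:|x_1|\le x_2\}$; a real $\lambda$ is an L-eigenvalue of $A$ if there is a nonzero $x\in\mathcal{K}$ with $(A-\lambda I)x\in\mathcal{K}$ and $x^T(A-\lambda I)x=0$; it is an interior L-eigenvalue if such $x$ can be taken in the interior of $\mathcal{K}$. Standard eigenvalues are roots of the characteristic polynomial. *)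

theory Defs
  imports "HOL-Analysis.Analysis"
begin

definition lorentz_cone :: "(real^2) set" where
  "lorentz_cone = {x. \<bar>x $ 1\<bar> \<le> x $ 2}"

definition L_eigenvalue :: "real^2^2 \<Rightarrow> real \<Rightarrow> bool" where
  "L_eigenvalue A lam \<longleftrightarrow> (\<exists>x. x \<noteq> 0 \<and> x \<in> lorentz_cone \<and>
      (A - lam *\<^sub>R mat 1) *v x \<in> lorentz_cone \<and> x \<bullet> ((A - lam *\<^sub>R mat 1) *v x) = 0)"

definition interior_L_eigenvalue :: "real^2^2 \<Rightarrow> real \<Rightarrow> bool" where
  "interior_L_eigenvalue A lam \<longleftrightarrow> (\<exists>x. x \<noteq> 0 \<and> x \<in> interior lorentz_cone \<and>
      (A - lam *\<^sub>R mat 1) *v x \<in> lorentz_cone \<and> x \<bullet> ((A - lam *\<^sub>R mat 1) *v x) = 0)"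

definition std_eigenvalue :: "real^2^2 \<Rightarrow> real \<Rightarrow> bool" where
  "std_eigenvalue A lam \<longleftrightarrow> det (lam *\<^sub>R mat 1 - A) = 0"

definition frob_norm :: "real^2^2 \<Rightarrow> real" where
  "frob_norm M = sqrt (\<Sum>i\<in>UNIV. \<Sum>j\<in>UNIV. (M $ i $ j)^2)"

end

theory Submission imports Defs begin
lemma charp: "det (l *\<^sub>R mat 1 - (M::real^2^2)) = (l - M$1$1)*(l - M$2$2) - M$1$2*M$2$1"
  by (simp add: det_2 mat_def algebra_simps)
lemma mv: "((M::real^2^2) *v x) $ 1 = M$1$1*x$1 + M$1$2*x$2" "(M *v x) $ 2 = M$2$1*x$1 + M$2$2*x$2"
  by (simp_all add: matrix_vector_mult_def sum_2)
lemma mvs: "((M::real^2^2) - l *\<^sub>R mat 1) $ i $ j = M$i$j - (if i = j then l else 0)"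
  by (simp add: mat_def)
lemma inner2: "(x::real^2) \<bullet> y = x$1*y$1 + x$2*y$2"
  by (simp add: inner_vec_def sum_2)
lemma frob: "frob_norm M = norm M"
  by (simp add: frob_norm_def norm_vec_def L2_set_def sum_2 real_norm_def)
lemma open_sub: "{x::real^2. \<bar>x$1\<bar> < x$2} \<subseteq> interior lorentz_cone"
proof (rule interior_maximal)
  show "{x::real^2. \<bar>x$1\<bar> < x$2} \<subseteq> lorentz_cone" by (auto simp: lorentz_cone_def)
  show "open {x::real^2. \<bar>x$1\<bar> < x$2}"
    by (intro open_Collect_less continuous_intros)
qed
lemma int_sub: assumes "x \<in> interior lorentz_cone" shows "\<bar>x$1\<bar> < x$2"
proof -
  obtain r where r: "r > 0" "ball x r \<subseteq> lorentz_cone" using assms by (meson mem_interior)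
  define y where "y = x - (r/2) *\<^sub>R axis 2 1"
  have "dist x y < r" using r by (simp add: y_def dist_norm norm_vec_def L2_set_def sum_2 axis_def)
  then have "y \<in> lorentz_cone" using r by auto
  then show ?thesis using r by (simp add: y_def lorentz_cone_def axis_def)
qed

lemma ev_at:
  fixes f :: "real^2^2 \<Rightarrow> real"
  assumes "continuous (at A) f" "f A > 0"
  shows "\<exists>d>0. \<forall>B. dist B A < d \<longrightarrow> f B > 0"
proof -
  have "eventually (\<lambda>B. f B > 0) (at A)"
    using assms by (metis continuous_at order_tendstoD(1))
  then obtain d where d: "d > 0" "\<forall>B. 0 < dist B A \<and> dist B A < d \<longrightarrow> f B > 0"
    by (auto simp: eventually_at)
  show ?thesis
  proof (intro exI[of _ d] conjI allI impI)
    show "d > 0" by (rule d(1))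
    fix B assume B: "dist B A < d"
    show "f B > 0"
    proof (cases "B = A")
      case True then show ?thesis using assms(2) by simp
    next
      case False then have "0 < dist B A" by simp
      then show ?thesis using d(2) B by blast
    qed
  qed
qed

theorem lemma4p6:
  fixes A :: "real^2^2" and lamA :: real
  assumes "\<exists>mu. std_eigenvalue A mu \<and> mu \<noteq> lamA"
    and "std_eigenvalue A lamA"
    and "interior_L_eigenvalue A lamA"
    and "lamA \<noteq> A $ 1 $ 1"
  shows "\<forall>e>0. \<exists>d>0. \<forall>B :: real^2^2. frob_norm (B - A) < d \<longrightarrow>
           (\<exists>lamB. interior_L_eigenvalue B lamB \<and> \<bar>lamA - lamB\<bar> < e)"
proof (intro allI impI)
  fix e :: real assume e: "e > 0"
  define D where "D = (\<lambda>B::real^2^2. (B$1$1 - B$2$2)^2 + 4 * B$1$2 * B$2$1)"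
  have key: "4 * ((l - B$1$1)*(l - B$2$2) - B$1$2*B$2$1) = (2*l - B$1$1 - B$2$2)^2 - D B"
    for l and B :: "real^2^2" by (simp add: D_def power2_eq_square algebra_simps)
  obtain mu where mu: "(mu - A$1$1)*(mu - A$2$2) - A$1$2*A$2$1 = 0" "mu \<noteq> lamA"
    using assms(1) by (auto simp: std_eigenvalue_def charp)
  have la: "(lamA - A$1$1)*(lamA - A$2$2) - A$1$2*A$2$1 = 0"
    using assms(2) by (simp add: std_eigenvalue_def charp)
  have sq1: "(2*lamA - A$1$1 - A$2$2)^2 = D A" using key[of lamA A] la by simp
  have sq2: "(2*mu - A$1$1 - A$2$2)^2 = D A" using key[of mu A] mu by simp
  have DA: "D A > 0"
  proof (rule ccontr)
    assume "\<not> D A > 0"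
    then have "D A \<le> 0" by simp
    then have "(2*lamA - A$1$1 - A$2$2)^2 \<le> 0" "(2*mu - A$1$1 - A$2$2)^2 \<le> 0"
      using sq1 sq2 by simp_all
    then have "2*lamA - A$1$1 - A$2$2 = 0" "2*mu - A$1$1 - A$2$2 = 0"
      by simp_all
    then show False using mu(2) by simp
  qed
  define s where "s = sgn (2*lamA - A$1$1 - A$2$2)"
  define G where "G = (\<lambda>B::real^2^2. (B$1$1 + B$2$2 + s * sqrt (D B)) / 2)"
  have s2: "s * s = 1" using sq1 DA by (auto simp: s_def sgn_if)
  have GA: "G A = lamA"
  proof -
    have "sqrt (D A) = \<bar>2*lamA - A$1$1 - A$2$2\<bar>" using sq1 by (metis real_sqrt_abs)
    then show ?thesis by (simp add: G_def s_def sgn_mult_abs)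
  qed
  have Groot: "(G B - B$1$1)*(G B - B$2$2) - B$1$2*B$2$1 = 0" if "D B > 0" for B
  proof -
    have "(2 * G B - B$1$1 - B$2$2)^2 = s * s * (sqrt (D B))^2"
      by (simp add: G_def power2_eq_square algebra_simps)
    also have "\<dots> = D B" using s2 that by simp
    finally show ?thesis using key[of "G B" B] by simp
  qed
  obtain x where x: "x \<in> interior lorentz_cone" "(A - lamA *\<^sub>R mat 1) *v x \<in> lorentz_cone"
    "x \<bullet> ((A - lamA *\<^sub>R mat 1) *v x) = 0"
    using assms(3) by (auto simp: interior_L_eigenvalue_def)
  define y where "y = (A - lamA *\<^sub>R mat 1) *v x"
  have x12: "\<bar>x$1\<bar> < x$2" using int_sub x(1) by blast
  have yK: "\<bar>y$1\<bar> \<le> y$2" using x(2) by (simp add: y_def lorentz_cone_def)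
  have xy: "x$1*y$1 + x$2*y$2 = 0" using x(3) by (simp add: y_def inner2)
  have "y$2 = 0"
  proof (rule ccontr)
    assume "y$2 \<noteq> 0"
    then have "y$2 > 0" using yK by linarith
    have "x$1*y$1 \<ge> - (\<bar>x$1\<bar>*\<bar>y$1\<bar>)" by (metis abs_ge_minus_self abs_mult minus_le_iff)
    moreover have "\<bar>x$1\<bar>*\<bar>y$1\<bar> \<le> \<bar>x$1\<bar>*y$2" using yK by (simp add: mult_left_mono)
    moreover have "\<bar>x$1\<bar>*y$2 < x$2*y$2" using x12 \<open>y$2 > 0\<close> by (simp add: mult_strict_right_mono)
    ultimately show False using xy by linarith
  qed
  then have "y$1 = 0" using yK by simp
  then have row1: "(A$1$1 - lamA)*x$1 + A$1$2*x$2 = 0"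
    by (simp add: y_def mv mvs mat_def algebra_simps)
  define t where "t = x$2 / (lamA - A$1$1)"
  have lne: "lamA - A$1$1 \<noteq> 0" using assms(4) by simp
  have x1: "x$1 = t * A$1$2" using row1 lne by (simp add: t_def field_simps)
  have x2: "x$2 = t * (lamA - A$1$1)" using lne by (simp add: t_def)
  define s' where "s' = sgn t"
  have tpos: "t \<noteq> 0" using x2 x12 by auto
  define p where "p = (\<lambda>B::real^2^2. s' * (G B - B$1$1) - \<bar>B$1$2\<bar>)"
  have pA: "p A > 0"
  proof -
    have h: "\<bar>t\<bar> * \<bar>A$1$2\<bar> < t * (lamA - A$1$1)" using x12 x1 x2 by (simp add: abs_mult)
    have "\<bar>A$1$2\<bar> < s' * (lamA - A$1$1)"
    proof (cases "t > 0")
      case True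
      then have "t * \<bar>A$1$2\<bar> < t * (lamA - A$1$1)" using h by simp
      then show ?thesis using True by (simp add: s'_def)
    next
      case False
      then have tn: "t < 0" using tpos by simp
      then have "t * (- \<bar>A$1$2\<bar>) < t * (lamA - A$1$1)" using h by simp
      then have "lamA - A$1$1 < - \<bar>A$1$2\<bar>" using tn mult_less_cancel_left_neg by blast
      then show ?thesis using tn by (simp add: s'_def)
    qed
    then show ?thesis by (simp add: p_def GA)
  qed
  have cG: "continuous (at A) G" unfolding G_def D_def
    by (intro continuous_intros) auto
  have cp: "continuous (at A) p" unfolding p_def
    by (intro continuous_intros cG)
  have cD: "continuous (at A) D" unfolding D_def by (intro continuous_intros)
  have cE: "continuous (at A) (\<lambda>B. e - \<bar>lamA - G B\<bar>)" by (intro continuous_intros cG)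
  obtain d1 where d1: "d1 > 0" "\<forall>B. dist B A < d1 \<longrightarrow> p B > 0" using ev_at[OF cp pA] by blast
  obtain d2 where d2: "d2 > 0" "\<forall>B. dist B A < d2 \<longrightarrow> D B > 0" using ev_at[OF cD DA] by blast
  obtain d3 where d3: "d3 > 0" "\<forall>B. dist B A < d3 \<longrightarrow> e - \<bar>lamA - G B\<bar> > 0"
    using ev_at[OF cE] e GA by auto
  show "\<exists>d>0. \<forall>B :: real^2^2. frob_norm (B - A) < d \<longrightarrow>
           (\<exists>lamB. interior_L_eigenvalue B lamB \<and> \<bar>lamA - lamB\<bar> < e)"
  proof (rule exI[of _ "min d1 (min d2 d3)"], intro conjI allI impI)
    show "min d1 (min d2 d3) > 0" using d1 d2 d3 by simp
    fix B :: "real^2^2" assume "frob_norm (B - A) < min d1 (min d2 d3)"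
    then have dB: "dist B A < d1" "dist B A < d2" "dist B A < d3" by (auto simp: frob dist_norm)
    have pB: "p B > 0" using d1 dB by blast
    have DB: "D B > 0" using d2 dB by blast
    have "e - \<bar>lamA - G B\<bar> > 0" using d3(2) dB(3) by blast
    then have eB: "\<bar>lamA - G B\<bar> < e" by linarith
    define z :: "real^2" where "z = (\<chi> i. if i = 1 then s' * B$1$2 else s' * (G B - B$1$1))"
    have z1: "z$1 = s' * B$1$2" and z2: "z$2 = s' * (G B - B$1$1)" by (simp_all add: z_def)
    have s'1: "\<bar>s'\<bar> = 1" using tpos by (simp add: s'_def abs_sgn)
    have zint: "\<bar>z$1\<bar> < z$2" using pB s'1 by (simp add: z1 z2 p_def abs_mult)
    have zero: "(B - G B *\<^sub>R mat 1) *v z = 0"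
    proof -
      have r1: "((B - G B *\<^sub>R mat 1) *v z) $ 1 = 0"
        by (simp add: mv mvs mat_def z1 z2 algebra_simps)
      have "((B - G B *\<^sub>R mat 1) *v z) $ 2 = - s' * ((G B - B$1$1)*(G B - B$2$2) - B$1$2*B$2$1)"
        by (simp add: mv mvs mat_def z1 z2 algebra_simps)
      then have r2: "((B - G B *\<^sub>R mat 1) *v z) $ 2 = 0" using Groot[OF DB] by simp
      from r1 r2 have "\<forall>i. ((B - G B *\<^sub>R mat 1) *v z) $ i = 0" by (simp add: forall_2)
      then show ?thesis by (simp add: vec_eq_iff)
    qed
    have "interior_L_eigenvalue B (G B)"
      unfolding interior_L_eigenvalue_def
    proof (intro exI[of _ z] conjI)
      show "z \<noteq> 0" using zint by (metis abs_ge_zero not_less zero_index)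
      show "z \<in> interior lorentz_cone" using open_sub zint by blast
      show "(B - G B *\<^sub>R mat 1) *v z \<in> lorentz_cone" by (simp add: zero lorentz_cone_def)
      show "z \<bullet> ((B - G B *\<^sub>R mat 1) *v z) = 0" by (simp add: zero)
    qed
    then show "\<exists>lamB. interior_L_eigenvalue B lamB \<and> \<bar>lamA - lamB\<bar> < e" using eB by blast
  qed
qed

end
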